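(* Let $N\ge2$, $b_1,\dots,b_N\in\{0,1\}$ with $b_N=1$ and $\sum_j b_j2^{N-j}>1$, and let $\rho$ be the largest real root of $x^N-\sum_{j=1}^N b_jx^{N-j}$, so $1=\sum_{k=1}^N b_k\rho^{-k}$. Let $I_k=[0,\rho^{-k}]$, $1\le k\le N$. In dimension $1$, $\rho I_1=[0,1]$ is partitioned into the intervals $I_k$ with $b_k=1$ placed edge to edge, and $\rho I_k=I_{k-1}$ for $2\le k\le N$. For $d\ge1$, let the tiles be the boxes $I_{k_1}\times\cdots\times I_{k_d}$ (and their copies), and decompose each inflated box $\rho(I_{k_1}\times\cdots\times I_{k_d})=\rho I_{k_1}\times\cdots\times\rho I_{k_d}$ as the cartesian product of the one-dimensional decompositions of the factors. Then the tessellations of $\mathbb{R}^d$ constructed by inflation from these decompositions are aperiodic (not periodic).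
   Context: Sets are essentially disjoint if their intersection has Lebesgue measure $0$. A tessellation of $\mathbb{R}^d$ is a covering by pairwise essentially disjoint tiles of finitely many types; constructing by inflation means iterating the decomposition of the inflated tiles $\rho^n R$ to cover increasing regions of $\mathbb{R}^d$. A tessellation is periodic if it is invariant under translation by a lattice (a discrete additive subgroup of rank $d$) of $\mathbb{R}^d$. *)

theory Defs
  imports "HOL-Analysis.Analysis"
begin

text \<open>One-dimensional decomposition of the inflated interval \<open>\<rho> I_k\<close>, given as a set of
  pairs (type j, left endpoint), where \<open>I_j = [0, \<rho>^-j]\<close>.\<close>
definition sub1 :: "(nat \<Rightarrow> nat) \<Rightarrow> real \<Rightarrow> nat \<Rightarrow> nat \<Rightarrow> (nat \<times> real) set" where
  "sub1 b \<rho> N k =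
     (if k = 1 then {(j, \<Sum>i\<in>{1..<j}. real (b i) / \<rho> ^ i) | j. j \<in> {1..N} \<and> b j = 1}
      else {(k - 1, 0)})"

text \<open>d-dimensional decomposition: cartesian product of the one-dimensional ones.
  A tile type is a function assigning to each coordinate an index in {1..N}.\<close>
definition subd :: "(nat \<Rightarrow> nat) \<Rightarrow> real \<Rightarrow> nat \<Rightarrow> ('n::finite \<Rightarrow> nat)
                    \<Rightarrow> (('n \<Rightarrow> nat) \<times> (real^'n)) set" where
  "subd b \<rho> N t = {(s, u). \<forall>i. (s i, u $ i) \<in> sub1 b \<rho> N (t i)}"

text \<open>Decomposition of \<open>\<rho>^n R_t\<close> (R_t the box of type t at the origin) obtained by
  iterating the decomposition n times; again pairs (type, translation).\<close>
fun supertile :: "(nat \<Rightarrow> nat) \<Rightarrow> real \<Rightarrow> nat \<Rightarrow> nat \<Rightarrow> ('n::finite \<Rightarrow> nat)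
                   \<Rightarrow> (('n \<Rightarrow> nat) \<times> (real^'n)) set" where
  "supertile b \<rho> N 0 t = {(t, 0)}"
| "supertile b \<rho> N (Suc n) t =
     {(s', (\<rho> ^ n) *\<^sub>R u + w) | s u s' w. (s, u) \<in> subd b \<rho> N t \<and> (s', w) \<in> supertile b \<rho> N n s}"

definition tile :: "real \<Rightarrow> ('n::finite \<Rightarrow> nat) \<Rightarrow> real^'n \<Rightarrow> (real^'n) set" where
  "tile \<rho> t u = {x. \<forall>i. u $ i \<le> x $ i \<and> x $ i \<le> u $ i + 1 / \<rho> ^ (t i)}"

definition patch :: "(nat \<Rightarrow> nat) \<Rightarrow> real \<Rightarrow> nat \<Rightarrow> nat \<Rightarrow> ('n::finite \<Rightarrow> nat) \<Rightarrow> (real^'n)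
                     \<Rightarrow> (real^'n) set set" where
  "patch b \<rho> N n t v = {tile \<rho> s (v + w) | s w. (s, w) \<in> supertile b \<rho> N n t}"

definition tessellation :: "(real^'n::finite) set set \<Rightarrow> bool" where
  "tessellation T \<longleftrightarrow> \<Union>T = UNIV \<and>
     (\<forall>A\<in>T. \<forall>B\<in>T. A \<noteq> B \<longrightarrow> A \<inter> B \<in> sets lebesgue \<and> emeasure lebesgue (A \<inter> B) = 0)"

definition inflation_tessellation ::
  "(nat \<Rightarrow> nat) \<Rightarrow> real \<Rightarrow> nat \<Rightarrow> (real^'n::finite) set set \<Rightarrow> bool" where
  "inflation_tessellation b \<rho> N T \<longleftrightarrow> tessellation T \<and>
     (\<exists>(t :: nat \<Rightarrow> 'n \<Rightarrow> nat) (v :: nat \<Rightarrow> real^'n).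
        (\<forall>n i. t n i \<in> {1..N}) \<and>
        (\<forall>n. patch b \<rho> N n (t n) (v n) \<subseteq> patch b \<rho> N (Suc n) (t (Suc n)) (v (Suc n))) \<and>
        T = (\<Union>n. patch b \<rho> N n (t n) (v n)))"

text \<open>Lattice: discrete additive subgroup of rank d (a discrete subgroup has rank d iff
  it spans \<open>\<real>^d\<close>).\<close>
definition lattice :: "(real^'n::finite) set \<Rightarrow> bool" where
  "lattice L \<longleftrightarrow> 0 \<in> L \<and> (\<forall>x\<in>L. \<forall>y\<in>L. x - y \<in> L) \<and>
     (\<exists>e>0. \<forall>x\<in>L. \<forall>y\<in>L. x \<noteq> y \<longrightarrow> e \<le> dist x y) \<and> span L = UNIV"

definition periodic :: "(real^'n::finite) set set \<Rightarrow> bool" where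
  "periodic T \<longleftrightarrow> (\<exists>L. lattice L \<and> (\<forall>l\<in>L. (\<lambda>A. (\<lambda>x. l + x) ` A) ` T = T))"

end

theory Submission
  imports Defs
begin



locale tset =
  fixes N :: nat and b :: "nat \<Rightarrow> nat" and \<rho> :: real
  assumes N2: "N \<ge> 2" and b01: "\<forall>j\<in>{1..N}. b j \<in> {0,1}" and bN: "b N = 1"
    and rho1: "\<rho> > 1" and sumb: "(\<Sum>j=1..N. real (b j) / \<rho> ^ j) = 1"
begin

definition uu :: "nat \<Rightarrow> real" where "uu j = (\<Sum>i\<in>{1..<j}. real (b i) / \<rho> ^ i)"

definition S :: "nat set" where "S = {j\<in>{1..N}. b j = 1}"

fun st1 :: "nat \<Rightarrow> nat \<Rightarrow> (nat \<times> real) set" where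
  "st1 0 k = {(k,0)}"
| "st1 (Suc n) k = {(s', \<rho>^n * u + w) | s u s' w. (s,u) \<in> sub1 b \<rho> N k \<and> (s',w) \<in> st1 n s}"

declare st1.simps(2)[simp del]

lemma sub1_1: "sub1 b \<rho> N 1 = (\<lambda>j. (j, uu j)) ` S"
  unfolding sub1_def S_def uu_def by auto

lemma sub1_ge2: "k \<noteq> 1 \<Longrightarrow> sub1 b \<rho> N k = {(k-1,0)}"
  unfolding sub1_def by auto

lemma st1_ge2: "k \<noteq> 1 \<Longrightarrow> st1 (Suc n) k = st1 n (k-1)"
  unfolding st1.simps(2)[of n k] sub1_ge2 by auto

lemma st1_1: "st1 (Suc n) 1 = (\<Union>j\<in>S. (\<lambda>(k,w). (k, \<rho>^n * uu j + w)) ` st1 n j)"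
  unfolding st1.simps(2)[of n 1] sub1_1 by fastforce

lemma b_le1: "j \<in> {1..N} \<Longrightarrow> b j \<le> 1" using b01 by fastforce

lemma NS: "N \<in> S" using N2 bN unfolding S_def by auto
lemma S_sub: "S \<subseteq> {1..N}" unfolding S_def by auto
lemma finS: "finite S" using S_sub finite_subset by blast

lemma rpos: "\<rho> > 0" using rho1 by simp

lemma uu_mono: assumes "j \<in> S" "j' \<in> {1..N}" "j < j'" shows "uu j + 1/\<rho>^j \<le> uu j'"
proof -
  have "uu j' = (\<Sum>i\<in>{1..<j}. real (b i) / \<rho> ^ i) + (\<Sum>i\<in>{j..<j'}. real (b i) / \<rho> ^ i)"
    unfolding uu_def using assms S_sub
    by (metis (no_types, lifting) atLeastAtMost_iff le_eq_less_or_eq subset_iff sum.atLeastLessThan_concat)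
  moreover have "(\<Sum>i\<in>{j..<j'}. real (b i) / \<rho> ^ i) \<ge> (\<Sum>i\<in>{j}. real (b i) / \<rho> ^ i)"
    by (rule sum_mono2) (use assms rpos in auto)
  ultimately show ?thesis using assms unfolding uu_def S_def by auto
qed

lemma uu_top: assumes "j \<in> S" shows "uu j + 1/\<rho>^j \<le> 1"
proof -
  have "uu j + 1/\<rho>^j = (\<Sum>i\<in>{1..<Suc j}. real (b i) / \<rho> ^ i)"
    using assms unfolding uu_def S_def by auto
  also have "\<dots> \<le> (\<Sum>i\<in>{1..N}. real (b i) / \<rho> ^ i)"
    by (rule sum_mono2) (use assms S_sub rpos in auto)
  finally show ?thesis using sumb by simp
qed

lemma uu_nonneg: "uu j \<ge> 0" unfolding uu_def using rpos by (auto intro!: sum_nonneg)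

lemma st1_bounds:
  "t \<in> {1..N} \<Longrightarrow> (k,w) \<in> st1 m t \<Longrightarrow> k \<in> {1..N} \<and> 0 \<le> w \<and> w + 1/\<rho>^k \<le> \<rho>^m/\<rho>^t"
proof (induction m arbitrary: t k w)
  case 0 then show ?case by auto
next
  case (Suc m)
  show ?case
  proof (cases "t = 1")
    case False
    then have "t - 1 \<in> {1..N}" "(k,w) \<in> st1 m (t-1)" using Suc.prems st1_ge2 by auto
    with Suc.IH have h: "k \<in> {1..N} \<and> 0 \<le> w \<and> w + 1/\<rho>^k \<le> \<rho>^m/\<rho>^(t-1)" by blast
    have "\<rho>^m/\<rho>^(t-1) = \<rho>^Suc m/\<rho>^t" using False Suc.prems(1) rpos
      by (cases t) (auto simp: field_simps)
    with h show ?thesis by simp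
  next
    case True
    with Suc.prems obtain j w' where j: "j \<in> S" "(k,w') \<in> st1 m j" "w = \<rho>^m * uu j + w'"
      using st1_1 by auto
    then have h: "k \<in> {1..N} \<and> 0 \<le> w' \<and> w' + 1/\<rho>^k \<le> \<rho>^m/\<rho>^j" using Suc.IH S_sub by blast
    have "\<rho>^m * uu j + \<rho>^m/\<rho>^j = \<rho>^m * (uu j + 1/\<rho>^j)" by (simp add: field_simps)
    also have "\<dots> \<le> \<rho>^m * 1" using uu_top[OF j(1)] rpos by (intro mult_left_mono) auto
    finally have "\<rho>^m * uu j + \<rho>^m/\<rho>^j \<le> \<rho>^Suc m / \<rho>^t" using True rpos by simp
    then show ?thesis using h j uu_nonneg rpos by (auto intro: add_nonneg_nonneg)
  qed
qed

lemma st1_finite: "finite (st1 m t)"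
proof (induction m arbitrary: t)
  case 0 then show ?case by simp
next
  case (Suc m)
  have "finite (sub1 b \<rho> N t)"
  proof (cases "t = 1")
    case True then show ?thesis using sub1_1 finS by simp
  next
    case False then show ?thesis using sub1_ge2[OF False] by simp
  qed
  moreover have "st1 (Suc m) t = (\<Union>(s,u)\<in>sub1 b \<rho> N t. (\<lambda>(s',w). (s', \<rho>^m*u+w)) ` st1 m s)"
    unfolding st1.simps(2)[of m t] by auto
  ultimately show ?case using Suc.IH by auto
qed

lemma st1_nonempty: "t \<in> {1..N} \<Longrightarrow> st1 m t \<noteq> {}"
proof (induction m arbitrary: t)
  case 0 then show ?case by simp
next
  case (Suc m)
  show ?case
  proof (cases "t = 1")
    case True
    then show ?thesis using Suc.IH[of N] NS S_sub st1_1 N2 by fastforce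
  next
    case False
    then have "t-1 \<in> {1..N}" using Suc.prems by auto
    then show ?thesis using Suc.IH[of "t-1"] st1_ge2[OF False, of m] by auto
  qed
qed

end



context tset begin

definition zz :: "nat \<Rightarrow> nat \<Rightarrow> nat \<Rightarrow> real" where
  "zz m t k = real (card {w. (k,w) \<in> st1 m t})"

definition Mop :: "(nat \<Rightarrow> real) \<Rightarrow> nat \<Rightarrow> real" where
  "Mop x k = (if k \<in> {1..N} then (if k < N then x (Suc k) else 0) + real (b k) * x 1 else 0)"

lemma fib_finite: "finite {w. (k,w) \<in> st1 m t}"
proof -
  have "{w. (k,w) \<in> st1 m t} \<subseteq> snd ` st1 m t" by force
  then show ?thesis using st1_finite finite_subset by blast
qed

lemma zz0: "zz 0 t k = (if k = t then 1 else 0)"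
  unfolding zz_def by auto

lemma zz_ge2: "t \<noteq> 1 \<Longrightarrow> zz (Suc m) t = zz m (t-1)"
  unfolding zz_def using st1_ge2 by (auto simp: fun_eq_iff)

lemma zz_out: assumes "t \<in> {1..N}" "k \<notin> {1..N}" shows "zz m t k = 0"
proof -
  have "{w. (k,w) \<in> st1 m t} = {}" using st1_bounds[OF assms(1)] assms(2) by blast
  then show ?thesis unfolding zz_def by simp
qed

lemma zz_1: "zz (Suc m) 1 k = (\<Sum>j\<in>S. zz m j k)"
proof -
  have eq: "{w. (k,w) \<in> st1 (Suc m) 1} = (\<Union>j\<in>S. (\<lambda>w. \<rho>^m * uu j + w) ` {w. (k,w) \<in> st1 m j})"
  proof (intro set_eqI iffI)
    fix x assume "x \<in> {w. (k,w) \<in> st1 (Suc m) 1}"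
    then obtain j p where j: "j \<in> S" "p \<in> st1 m j" "(k,x) = (case p of (k,w) \<Rightarrow> (k, \<rho>^m*uu j+w))"
      unfolding st1_1 by auto
    then obtain w where "p = (k,w)" "x = \<rho>^m*uu j+w" by (cases p) auto
    then show "x \<in> (\<Union>j\<in>S. (\<lambda>w. \<rho>^m * uu j + w) ` {w. (k,w) \<in> st1 m j})" using j by blast
  next
    fix x assume "x \<in> (\<Union>j\<in>S. (\<lambda>w. \<rho>^m * uu j + w) ` {w. (k,w) \<in> st1 m j})"
    then obtain j w where j: "j \<in> S" "(k,w) \<in> st1 m j" "x = \<rho>^m * uu j + w" by auto
    then show "x \<in> {w. (k,w) \<in> st1 (Suc m) 1}" unfolding st1_1
      by (auto intro!: bexI[of _ j] image_eqI[of _ _ "(k,w)"])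
  qed
  have disj: "((\<lambda>w. \<rho>^m * uu j + w) ` {w. (k,w) \<in> st1 m j}) \<inter>
              ((\<lambda>w. \<rho>^m * uu j' + w) ` {w. (k,w) \<in> st1 m j'}) = {}"
    if jj: "j \<in> S" "j' \<in> S" "j < j'" for j j'
  proof -
    { fix w w' assume w: "(k,w) \<in> st1 m j" and w': "(k,w') \<in> st1 m j'"
      have bw: "0 \<le> w \<and> w + 1/\<rho>^k \<le> \<rho>^m/\<rho>^j" using st1_bounds[OF _ w] jj S_sub by auto
      have bw': "0 \<le> w'" using st1_bounds[OF _ w'] jj S_sub by auto
      have "1/\<rho>^k > 0" using rpos by simp
      then have "w < \<rho>^m/\<rho>^j" using bw by linarith
      then have "\<rho>^m * uu j + w < \<rho>^m * (uu j + 1/\<rho>^j)" by (simp add: field_simps)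
      also have "\<dots> \<le> \<rho>^m * uu j'" using uu_mono[of j j'] jj S_sub rpos
        by (intro mult_left_mono) auto
      finally have "\<rho>^m * uu j + w \<noteq> \<rho>^m * uu j' + w'" using bw' by linarith }
    then show ?thesis by blast
  qed
  have "card {w. (k,w) \<in> st1 (Suc m) 1} = (\<Sum>j\<in>S. card ((\<lambda>w. \<rho>^m * uu j + w) ` {w. (k,w) \<in> st1 m j}))"
    unfolding eq
  proof (rule card_UN_disjoint)
    show "finite S" by (rule finS)
    show "\<forall>i\<in>S. finite ((\<lambda>w. \<rho> ^ m * uu i + w) ` {w. (k, w) \<in> st1 m i})"
      using fib_finite by auto
    show "\<forall>i\<in>S. \<forall>j\<in>S. i \<noteq> j \<longrightarrow>
      (\<lambda>w. \<rho> ^ m * uu i + w) ` {w. (k, w) \<in> st1 m i} \<inter> (\<lambda>w. \<rho> ^ m * uu j + w) ` {w. (k, w) \<in> st1 m j} = {}"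
      using disj by (metis Int_commute linorder_neqE_nat)
  qed
  also have "\<dots> = (\<Sum>j\<in>S. card {w. (k,w) \<in> st1 m j})"
    by (intro sum.cong refl card_image) (auto simp: inj_on_def)
  finally show ?thesis unfolding zz_def by simp
qed

lemma Mop_sum: "finite A \<Longrightarrow> Mop (\<lambda>k. \<Sum>j\<in>A. f j k) = (\<lambda>k. \<Sum>j\<in>A. Mop (f j) k)"
  unfolding Mop_def by (auto simp: fun_eq_iff sum.distrib sum_distrib_left)

lemma zz_Suc: "t \<in> {1..N} \<Longrightarrow> zz (Suc m) t = Mop (zz m t)"
proof (induction m arbitrary: t)
  case 0
  show ?case
  proof (cases "t = 1")
    case True
    have "zz 1 1 k = Mop (zz 0 1) k" for k
    proof -
      have "zz 1 1 k = (\<Sum>j\<in>S. if k = j then 1 else 0)" using zz_1[of 0 k] zz0 by simp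
      also have "\<dots> = (if k \<in> S then 1 else 0)" using finS by simp
      also have "\<dots> = Mop (zz 0 1) k" unfolding Mop_def zz0 S_def using b01 by auto
      finally show ?thesis .
    qed
    then show ?thesis using True by auto
  next
    case False
    then show ?thesis using 0 zz_ge2[OF False, of 0]
      unfolding Mop_def by (auto simp: fun_eq_iff zz0)
  qed
next
  case (Suc m)
  show ?case
  proof (cases "t = 1")
    case True
    have "zz (Suc (Suc m)) 1 = (\<lambda>k. \<Sum>j\<in>S. zz (Suc m) j k)" using zz_1 by auto
    also have "\<dots> = (\<lambda>k. \<Sum>j\<in>S. Mop (zz m j) k)"
    proof (intro ext sum.cong refl)
      fix k j assume "j \<in> S"
      then have "j \<in> {1..N}" using S_sub by auto
      then show "zz (Suc m) j k = Mop (zz m j) k" using Suc.IH by simp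
    qed
    also have "\<dots> = Mop (\<lambda>k. \<Sum>j\<in>S. zz m j k)" using Mop_sum[OF finS] by metis
    also have "\<dots> = Mop (zz (Suc m) 1)" using zz_1 by presburger
    finally show ?thesis using True by simp
  next
    case False
    then have "t - 1 \<in> {1..N}" using Suc.prems by auto
    then show ?thesis using Suc.IH[of "t-1"] zz_ge2[OF False] by simp
  qed
qed

definition vol :: "(nat \<Rightarrow> real) \<Rightarrow> real" where
  "vol x = (\<Sum>k=1..N. x k / \<rho>^k)"

lemma vol_Mop: "vol (Mop x) = \<rho> * vol x"
proof -
  have "vol (Mop x) = (\<Sum>k=1..N. (if k < N then x (Suc k) else 0) / \<rho>^k) + (\<Sum>k=1..N. real (b k) * x 1 / \<rho>^k)"
    unfolding vol_def Mop_def by (auto simp: sum.distrib add_divide_distrib intro!: sum.cong)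
  also have "(\<Sum>k=1..N. real (b k) * x 1 / \<rho>^k) = x 1"
  proof -
    have "(\<Sum>k=1..N. real (b k) * x 1 / \<rho>^k) = x 1 * (\<Sum>k=1..N. real (b k) / \<rho>^k)"
      by (auto simp: sum_distrib_left intro!: sum.cong)
    then show ?thesis using sumb by simp
  qed
  also have "(\<Sum>k=1..N. (if k < N then x (Suc k) else 0) / \<rho>^k) = (\<Sum>k=1..<N. x (Suc k) / \<rho>^k)"
  proof -
    have "{1..N} = insert N {1..<N}" using N2 by auto
    then show ?thesis by (simp add: sum.insert)
  qed
  also have "\<dots> = (\<Sum>k=2..N. x k / \<rho>^(k-1))"
  proof -
    have "(\<Sum>k=1..<N. x (Suc k) / \<rho>^k) = (\<Sum>k\<in>Suc ` {1..<N}. x k / \<rho>^(k-1))"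
      by (subst sum.reindex) auto
    also have "Suc ` {1..<N} = {2..N}" using N2 by (auto simp: image_iff)
    finally show ?thesis .
  qed
  also have "\<dots> = \<rho> * (\<Sum>k=2..N. x k / \<rho>^k)"
    unfolding sum_distrib_left
  proof (intro sum.cong refl)
    fix k assume "k \<in> {2..N}"
    then have "\<rho>^k = \<rho> * \<rho>^(k-1)" by (metis Suc_diff_1 atLeastAtMost_iff less_le_trans pos2 power_Suc)
    then show "x k / \<rho>^(k-1) = \<rho> * (x k / \<rho>^k)" using rpos by (simp add: field_simps)
  qed
  finally have "vol (Mop x) = \<rho> * (\<Sum>k=2..N. x k / \<rho>^k) + x 1" .
  moreover have "vol x = x 1 / \<rho> + (\<Sum>k=2..N. x k / \<rho>^k)"
  proof -
    have "{1..N} = insert 1 {2..N}" using N2 by auto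
    then show ?thesis unfolding vol_def by simp
  qed
  ultimately show ?thesis using rpos by (simp add: field_simps)
qed

lemma vol_zz: "t \<in> {1..N} \<Longrightarrow> vol (zz m t) = \<rho>^m / \<rho>^t"
proof (induction m)
  case 0
  have "(\<Sum>k=1..N. (if k = t then 1 else 0)/\<rho>^k) = (\<Sum>k=1..N. if k = t then 1/\<rho>^k else 0)"
    by (intro sum.cong) auto
  also have "\<dots> = 1/\<rho>^t" using 0 by (simp add: sum.delta)
  finally show ?case unfolding vol_def zz0 by simp
next
  case (Suc m)
  then show ?case using zz_Suc vol_Mop by simp
qed

end



locale oneD = tset +
  fixes D :: "(nat \<times> real) set" and p :: real
  assumes p_pos: "p > 0"
    and D_types: "(k,x) \<in> D \<Longrightarrow> k \<in> {1..N}"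
    and D_shift1: "(k,x) \<in> D \<Longrightarrow> (k, x + p) \<in> D"
    and D_shift2: "(k,x) \<in> D \<Longrightarrow> (k, x - p) \<in> D"
    and D_disj: "(k,x) \<in> D \<Longrightarrow> (k',x') \<in> D \<Longrightarrow> x \<le> x' \<Longrightarrow> (k,x) \<noteq> (k',x') \<Longrightarrow> x + 1/\<rho>^k \<le> x'"
    and D_occ: "\<And>n. \<exists>t a. t \<in> {1..N} \<and> (\<forall>k w. (k,w) \<in> st1 n t \<longrightarrow> (k, a + w) \<in> D)"
begin

lemma pack:
  assumes "finite F" "F \<subseteq> D" "\<forall>(k,x)\<in>F. lo \<le> x \<and> x + 1/\<rho>^k \<le> hi" "lo \<le> hi"
  shows "(\<Sum>(k,x)\<in>F. 1/\<rho>^k) \<le> hi - lo"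
  using assms
proof (induction "card F" arbitrary: F hi rule: less_induct)
  case less
  show ?case
  proof (cases "F = {}")
    case True then show ?thesis using less.prems by simp
  next
    case False
    define x0 where "x0 = Max (snd ` F)"
    have "x0 \<in> snd ` F" unfolding x0_def using False less.prems(1) by (intro Max_in) auto
    then obtain k0 where e: "(k0,x0) \<in> F" by force
    have le: "x \<le> x0" if "(k,x) \<in> F" for k x
      unfolding x0_def using that less.prems(1) by (metis Max_ge finite_imageI image_eqI snd_conv)
    let ?F = "F - {(k0,x0)}"
    have sub: "\<forall>(k,x)\<in>?F. lo \<le> x \<and> x + 1/\<rho>^k \<le> x0"
    proof (rule ballI)
      fix ee assume he: "ee \<in> ?F"
      obtain k x where ex: "ee = (k,x)" by (cases ee)
      with he have h: "(k,x) \<in> F" "(k,x) \<noteq> (k0,x0)" by auto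
      then have "x + 1/\<rho>^k \<le> x0" using D_disj[of k x k0 x0] le[OF h(1)] e less.prems(2) by auto
      then show "case ee of (k,x) \<Rightarrow> lo \<le> x \<and> x + 1/\<rho>^k \<le> x0" using less.prems(3) h ex by auto
    qed
    have lox0: "lo \<le> x0" using less.prems(3) e by auto
    have "card ?F < card F" using e less.prems(1) by (meson card_Diff1_less)
    then have IH: "(\<Sum>(k,x)\<in>?F. 1/\<rho>^k) \<le> x0 - lo"
      using less.hyps[of ?F x0] less.prems sub lox0 by auto
    have "(\<Sum>(k,x)\<in>F. 1/\<rho>^k) = 1/\<rho>^k0 + (\<Sum>(k,x)\<in>?F. 1/\<rho>^k)"
      using e less.prems(1) by (simp add: sum.remove)
    moreover have "x0 + 1/\<rho>^k0 \<le> hi" using less.prems(3) e by auto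
    ultimately show ?thesis using IH by linarith
  qed
qed

definition PP :: "real \<Rightarrow> real \<Rightarrow> (nat \<times> real) set" where
  "PP a L = {(k,x). (k,x) \<in> D \<and> a \<le> x \<and> x < a + L}"

definition W :: "real \<Rightarrow> real \<Rightarrow> nat \<Rightarrow> real set" where
  "W a L k = {x. (k,x) \<in> D \<and> a \<le> x \<and> x < a + L}"

definition cnt :: "nat \<Rightarrow> real \<Rightarrow> real \<Rightarrow> nat" where
  "cnt k a L = card (W a L k)"

lemma inv_le1: "1/\<rho>^k \<le> 1" using rho1 by (simp add: divide_le_eq_1)

lemma PP_bound: assumes "L \<ge> 0" "finite G" "G \<subseteq> PP a L"
  shows "(\<Sum>(k,x)\<in>G. 1/\<rho>^k) \<le> L + 1"
proof -
  have "(\<Sum>(k,x)\<in>G. 1/\<rho>^k) \<le> (a + L + 1) - a"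
  proof (rule pack)
    show "G \<subseteq> D" using assms unfolding PP_def by auto
    show "\<forall>(k,x)\<in>G. a \<le> x \<and> x + 1/\<rho>^k \<le> a + L + 1"
    proof clarify
      fix k x assume "(k,x) \<in> G"
      then have "a \<le> x" "x < a + L" using assms(3) unfolding PP_def by auto
      then show "a \<le> x \<and> x + 1/\<rho>^k \<le> a + L + 1" using inv_le1[of k] by linarith
    qed
  qed (use assms in auto)
  then show ?thesis by simp
qed

lemma PP_finite: assumes "L \<ge> 0" shows "finite (PP a L)"
proof (rule finite_if_finite_subsets_card_bdd[THEN conjunct1])
  fix G assume G: "G \<subseteq> PP a L" "finite G"
  have "(\<Sum>(k,x)\<in>G. 1/\<rho>^N) \<le> (\<Sum>(k,x)\<in>G. 1/\<rho>^k)"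
  proof (intro sum_mono)
    fix e assume "e \<in> G"
    then obtain k x where e: "e = (k,x)" "(k,x) \<in> D" using G unfolding PP_def by auto
    then have "k \<le> N" using D_types by auto
    then have "\<rho>^k \<le> \<rho>^N" using rho1 by (intro power_increasing) auto
    then show "(case e of (k,x) \<Rightarrow> 1/\<rho>^N) \<le> (case e of (k,x) \<Rightarrow> 1/\<rho>^k)"
      using e rpos by (simp add: frac_le)
  qed
  also have "\<dots> \<le> L + 1" using PP_bound[OF assms G(2,1)] .
  finally have "real (card G) / \<rho>^N \<le> L + 1" by (simp add: split_def)
  then have "real (card G) \<le> (L + 1) * \<rho>^N" using rpos by (simp add: divide_le_eq)
  then show "card G \<le> nat \<lceil>(L + 1) * \<rho>^N\<rceil>" by linarith
qed

lemma W_finite: assumes "L \<ge> 0" shows "finite (W a L k)"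
proof -
  have "W a L k \<subseteq> snd ` PP a L" unfolding W_def PP_def by force
  then show ?thesis using PP_finite[OF assms] finite_subset by blast
qed

lemma cnt_sum: assumes "L \<ge> 0" shows "(\<Sum>k=1..N. real (cnt k a L) / \<rho>^k) \<le> L + 1"
proof -
  have "PP a L = Sigma {1..N} (W a L)" unfolding PP_def W_def using D_types by auto
  have "(\<Sum>k=1..N. real (cnt k a L) / \<rho>^k) = (\<Sum>k=1..N. \<Sum>x\<in>W a L k. 1/\<rho>^k)"
    unfolding cnt_def by simp
  also have "\<dots> = (\<Sum>(k,x)\<in>Sigma {1..N} (W a L). 1/\<rho>^k)"
    by (rule sum.Sigma) (use W_finite[OF assms] in auto)
  also have "Sigma {1..N} (W a L) = PP a L" unfolding PP_def W_def using D_types by auto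
  finally show ?thesis using PP_bound[OF assms PP_finite[OF assms] order_refl] by simp
qed

lemma W_shift: "W (a + p) L k = (\<lambda>x. x + p) ` W a L k"
proof (intro set_eqI iffI)
  fix y assume "y \<in> W (a + p) L k"
  then have "y - p \<in> W a L k" unfolding W_def using D_shift2 by auto
  then show "y \<in> (\<lambda>x. x + p) ` W a L k" by (auto intro!: image_eqI[of _ _ "y - p"])
next
  fix y assume "y \<in> (\<lambda>x. x + p) ` W a L k"
  then show "y \<in> W (a + p) L k" unfolding W_def using D_shift1 by auto
qed

lemma cnt_shift: "cnt k (a + p) L = cnt k a L"
  unfolding cnt_def W_shift by (simp add: card_image)

lemma cnt_shift_nat: "cnt k (a + real n * p) L = cnt k a L \<and> cnt k (a - real n * p) L = cnt k a L"
proof (induction n)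
  case 0 then show ?case by simp
next
  case (Suc n)
  have e1: "a + real (Suc n) * p = (a + real n * p) + p" by (simp add: algebra_simps)
  have c1: "cnt k (a + real (Suc n) * p) L = cnt k (a + real n*p) L" unfolding e1 by (rule cnt_shift)
  have e2: "a - real n * p = (a - real (Suc n) * p) + p" by (simp add: algebra_simps)
  have c2: "cnt k (a - real n * p) L = cnt k (a - real (Suc n)*p) L" unfolding e2 by (rule cnt_shift)
  show ?case using c1 c2 Suc.IH by simp
qed

lemma cnt_shift_int: "cnt k (a + of_int m * p) L = cnt k a L"
proof (cases "m \<ge> 0")
  case True
  then have h: "a + of_int m * p = a + real (nat m) * p" by simp
  show ?thesis unfolding h using cnt_shift_nat[of k a "nat m" L] by blast
next
  case False
  then have h: "a + of_int m * p = a - real (nat (-m)) * p" by simp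
  show ?thesis unfolding h using cnt_shift_nat[of k a "nat (-m)" L] by blast
qed

lemma cnt_add: assumes "L1 \<ge> 0" "L2 \<ge> 0" shows "cnt k a (L1 + L2) = cnt k a L1 + cnt k (a + L1) L2"
proof -
  have "W a (L1 + L2) k = W a L1 k \<union> W (a + L1) L2 k" unfolding W_def using assms by auto
  moreover have "W a L1 k \<inter> W (a + L1) L2 k = {}" unfolding W_def by auto
  ultimately show ?thesis unfolding cnt_def using W_finite assms by (simp add: card_Un_disjoint)
qed

lemma cnt_indep: "cnt k a p = cnt k 0 p"
proof -
  define c where "c = a - of_int \<lfloor>a/p\<rfloor> * p"
  have f1: "of_int \<lfloor>a/p\<rfloor> \<le> a/p" "a/p < of_int \<lfloor>a/p\<rfloor> + 1"
    using floor_correct[of "a/p"] by auto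
  have f3: "of_int \<lfloor>a/p\<rfloor> * p \<le> a" using f1(1) p_pos by (simp add: le_divide_eq)
  have f4: "a < (of_int \<lfloor>a/p\<rfloor> + 1) * p" using pos_divide_less_eq[OF p_pos] f1(2) by blast
  have c: "0 \<le> c" "c < p" unfolding c_def using f3 f4 by (auto simp: algebra_simps)
  have "cnt k a p = cnt k c p" using cnt_shift_int[of k c "\<lfloor>a/p\<rfloor>" p] unfolding c_def by simp
  also have "\<dots> = cnt k c (p - c) + cnt k p c" using cnt_add[of "p - c" c k c] c by simp
  also have "cnt k p c = cnt k 0 c" using cnt_shift[of k 0 c] by simp
  also have "cnt k c (p - c) + cnt k 0 c = cnt k 0 p" using cnt_add[of c "p - c" k 0] c by simp
  finally show ?thesis .
qed

definition wv :: "nat \<Rightarrow> real" where "wv k = real (cnt k 0 p)"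

lemma cnt_mult: "real (cnt k a (real n * p)) = real n * wv k"
proof (induction n arbitrary: a)
  case 0
  have "W a 0 k = {}" unfolding W_def by auto
  then show ?case by (simp add: cnt_def)
next
  case (Suc n)
  have "cnt k a (real (Suc n) * p) = cnt k a p + cnt k (a + p) (real n * p)"
    using cnt_add[of p "real n * p" k a] p_pos by (simp add: algebra_simps)
  then show ?case using Suc cnt_indep unfolding wv_def by (simp add: algebra_simps)
qed

lemma cnt_mono: assumes "0 \<le> L1" "L1 \<le> L2" shows "cnt k a L1 \<le> cnt k a L2"
  using cnt_add[of L1 "L2 - L1" k a] assms by simp

lemma wv_nonneg: "wv k \<ge> 0" unfolding wv_def by simp

lemma cnt_est: assumes "L \<ge> 0" shows "\<bar>real (cnt k a L) - L/p * wv k\<bar> \<le> wv k"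
proof -
  define q where "q = nat \<lfloor>L/p\<rfloor>"
  have q: "real q \<le> L/p" "L/p < real q + 1" unfolding q_def using assms p_pos by auto
  then have q2: "real q * p \<le> L" "L \<le> (real q + 1) * p" using p_pos by (auto simp: field_simps)
  have A: "cnt k a (real q * p) \<le> cnt k a L"
    using cnt_mono[OF _ q2(1)] p_pos by simp
  have "L \<le> real (Suc q) * p" using q2 by (simp add: algebra_simps)
  then have B: "cnt k a L \<le> cnt k a (real (Suc q) * p)"
    using cnt_mono[OF assms] by simp
  have C: "real (cnt k a (real (Suc q) * p)) = real (Suc q) * wv k"
    "real (cnt k a (real q * p)) = real q * wv k" by (rule cnt_mult)+
  have "real q * wv k \<le> real (cnt k a L)" using A C(2) by (metis of_nat_le_iff)
  moreover have "real (cnt k a L) \<le> (real q + 1) * wv k" using B C(1)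
    by (metis add.commute of_nat_Suc of_nat_le_iff)
  moreover have "real q * wv k \<le> L/p * wv k" "L/p * wv k \<le> (real q + 1) * wv k"
    using mult_right_mono[OF q(1) wv_nonneg[of k]] mult_right_mono[OF less_imp_le[OF q(2)] wv_nonneg[of k]]
    by auto
  ultimately show ?thesis by (simp add: abs_le_iff algebra_simps)
qed

definition Occ :: "nat \<Rightarrow> nat \<Rightarrow> real \<Rightarrow> bool" where
  "Occ m t a \<longleftrightarrow> (\<forall>k w. (k,w) \<in> st1 m t \<longrightarrow> (k, a + w) \<in> D)"

lemma wv_out: assumes "k \<notin> {1..N}" shows "wv k = 0"
proof -
  have "W 0 p k = {}" unfolding W_def using D_types assms by blast
  then show ?thesis unfolding wv_def cnt_def by simp
qed

lemma patch_est:
  assumes t: "t \<in> {1..N}" and occ: "Occ m t a"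
  shows "\<bar>zz m t k - (\<rho>^m/\<rho>^t)/p * wv k\<bar> \<le> wv k + \<rho>^N"
proof (cases "k \<in> {1..N}")
  case False
  then show ?thesis using zz_out[OF t False] wv_out[OF False] rpos by simp
next
  case True
  define L where "L = \<rho>^m/\<rho>^t"
  have L0: "L \<ge> 0" unfolding L_def using rpos by simp
  have le: "zz m t k' \<le> real (cnt k' a L)" for k'
  proof -
    have "(\<lambda>w. a + w) ` {w. (k',w) \<in> st1 m t} \<subseteq> W a L k'"
    proof
      fix y assume "y \<in> (\<lambda>w. a + w) ` {w. (k',w) \<in> st1 m t}"
      then obtain w where w: "(k',w) \<in> st1 m t" "y = a + w" by auto
      then have "0 \<le> w" "w + 1/\<rho>^k' \<le> L" using st1_bounds[OF t w(1)] unfolding L_def by auto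
      moreover have pos: "1/\<rho>^k' > 0" using rpos by simp
      ultimately have "w < L" by linarith
      then show "y \<in> W a L k'" unfolding W_def using occ w \<open>0 \<le> w\<close> unfolding Occ_def by auto
    qed
    then have "card ((\<lambda>w. a + w) ` {w. (k',w) \<in> st1 m t}) \<le> cnt k' a L"
      unfolding cnt_def using W_finite[OF L0] by (intro card_mono) auto
    then show ?thesis unfolding zz_def by (simp add: card_image)
  qed
  have "(\<Sum>k'=1..N. (real (cnt k' a L) - zz m t k') / \<rho>^k') =
        (\<Sum>k'=1..N. real (cnt k' a L) / \<rho>^k') - vol (zz m t)"
    unfolding vol_def by (simp add: sum_subtractf diff_divide_distrib)
  also have "\<dots> \<le> 1" using cnt_sum[OF L0, of a] vol_zz[OF t, of m] unfolding L_def by simp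
  finally have s1: "(\<Sum>k'=1..N. (real (cnt k' a L) - zz m t k') / \<rho>^k') \<le> 1" .
  have "(real (cnt k a L) - zz m t k) / \<rho>^k \<le> (\<Sum>k'=1..N. (real (cnt k' a L) - zz m t k') / \<rho>^k')"
    by (rule member_le_sum) (use True le rpos in auto)
  then have "(real (cnt k a L) - zz m t k) / \<rho>^k \<le> 1" using s1 by linarith
  then have "real (cnt k a L) - zz m t k \<le> \<rho>^k" using rpos by (simp add: divide_le_eq)
  moreover have "\<rho>^k \<le> \<rho>^N" using True rho1 by (intro power_increasing) auto
  moreover have "\<bar>real (cnt k a L) - L/p * wv k\<bar> \<le> wv k" by (rule cnt_est[OF L0])
  ultimately show ?thesis using le[of k] unfolding L_def by (simp add: abs_le_iff)
qed

end



context tset begin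

lemma Mop_lin: "Mop (\<lambda>k. x k + c * y k) = (\<lambda>k. Mop x k + c * Mop y k)"
  unfolding Mop_def by (auto simp: fun_eq_iff algebra_simps)

lemma Mop_iter_lin: "(Mop ^^ j) (\<lambda>k. x k + c * y k) = (\<lambda>k. (Mop ^^ j) x k + c * (Mop ^^ j) y k)"
proof (induction j)
  case 0 then show ?case by simp
next
  case (Suc j)
  then show ?case using Mop_lin by simp
qed

lemma Mop_bound: assumes "\<forall>k. \<bar>x k\<bar> \<le> B" shows "\<forall>k. \<bar>Mop x k\<bar> \<le> 2 * B"
proof
  fix k
  have B0: "0 \<le> B" using assms by (meson abs_ge_zero order_trans)
  show "\<bar>Mop x k\<bar> \<le> 2 * B"
  proof (cases "k \<in> {1..N}")
    case True
    have h1: "\<bar>(if k < N then x (Suc k) else 0)\<bar> \<le> B" using assms B0 by auto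
    have "real (b k) \<le> 1" using b_le1[OF True] by simp
    then have h2: "\<bar>real (b k) * x 1\<bar> \<le> B"
      using assms mult_mono[of "real (b k)" 1 "\<bar>x 1\<bar>" B] B0 by (simp add: abs_mult)
    have "Mop x k = (if k < N then x (Suc k) else 0) + real (b k) * x 1"
      unfolding Mop_def by (rule if_P[OF True])
    then show ?thesis using h1 h2 abs_triangle_ineq[of "(if k < N then x (Suc k) else 0)" "real (b k) * x 1"]
      by linarith
  next
    case False
    have "Mop x k = 0" unfolding Mop_def by (rule if_not_P[OF False])
    then show ?thesis using B0 by simp
  qed
qed

lemma Mop_iter_bound: assumes "\<forall>k. \<bar>x k\<bar> \<le> B" shows "\<forall>k. \<bar>(Mop ^^ j) x k\<bar> \<le> 2^j * B"
proof (induction j)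
  case 0 then show ?case using assms by simp
next
  case (Suc j)
  then show ?case using Mop_bound[OF Suc.IH] by (simp add: algebra_simps)
qed

lemma Mop_Ints: assumes "\<forall>k. x k \<in> \<int>" shows "\<forall>k. (Mop ^^ j) x k \<in> \<int>"
proof (induction j)
  case 0 then show ?case using assms by simp
next
  case (Suc j)
  show ?case
  proof
    fix k
    show "(Mop ^^ Suc j) x k \<in> \<int>" using Suc.IH unfolding Mop_def by auto
  qed
qed

lemma zz_iter: "zz (n + j) 1 = (Mop ^^ j) (zz n 1)"
proof (induction j)
  case 0 then show ?case by simp
next
  case (Suc j)
  have "zz (n + Suc j) 1 = Mop (zz (n + j) 1)" using zz_Suc[of 1 "n+j"] N2 by simp
  then show ?case using Suc by simp
qed

lemma zz_norm: "t \<in> {1..N} \<Longrightarrow> t \<le> m + 1 \<Longrightarrow> zz m t = zz (m + 1 - t) 1"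
proof (induction m arbitrary: t)
  case 0 then show ?case by (cases t) auto
next
  case (Suc m)
  show ?case
  proof (cases "t = 1")
    case True then show ?thesis by simp
  next
    case False
    then have "t - 1 \<in> {1..N}" "t - 1 \<le> m + 1" using Suc.prems by auto
    then show ?thesis using Suc.IH[of "t-1"] zz_ge2[OF False] False Suc.prems
      by (simp add: Suc_diff_le)
  qed
qed

end

context oneD begin

lemma Occ_ge2: "t \<noteq> 1 \<Longrightarrow> Occ (Suc m) t a \<Longrightarrow> Occ m (t-1) a"
  unfolding Occ_def using st1_ge2 by auto

lemma Occ_sub: assumes "Occ (Suc m) 1 a" "j \<in> S" shows "Occ m j (a + \<rho>^m * uu j)"
  unfolding Occ_def
proof (intro allI impI)
  fix k w assume "(k,w) \<in> st1 m j"
  then have "(k, \<rho>^m * uu j + w) \<in> st1 (Suc m) 1" unfolding st1_1 using assms(2)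
    by (auto intro!: bexI[of _ j] image_eqI[of _ _ "(k,w)"])
  then have "(k, a + (\<rho>^m * uu j + w)) \<in> D" using assms(1) unfolding Occ_def by blast
  then show "(k, a + \<rho>^m * uu j + w) \<in> D" by (simp add: add.assoc)
qed

lemma Occ_norm: "t \<in> {1..N} \<Longrightarrow> t \<le> m + 1 \<Longrightarrow> Occ m t a \<Longrightarrow> Occ (m + 1 - t) 1 a"
proof (induction m arbitrary: t)
  case 0 then show ?case by (cases t) auto
next
  case (Suc m)
  show ?case
  proof (cases "t = 1")
    case True then show ?thesis using Suc.prems by simp
  next
    case False
    then have "t - 1 \<in> {1..N}" "t - 1 \<le> m + 1" using Suc.prems by auto
    moreover have "Occ m (t-1) a" using Occ_ge2[OF False Suc.prems(3)] .
    ultimately have "Occ (m + 1 - (t-1)) 1 a" using Suc.IH by blast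
    moreover have "m + 1 - (t-1) = Suc m + 1 - t" using False Suc.prems by auto
    ultimately show ?thesis by simp
  qed
qed

lemma Occ_down: assumes "Occ m 1 a" "j \<in> S" "j \<le> m" shows "\<exists>a'. Occ (m - j) 1 a'"
proof -
  obtain m' where m': "m = Suc m'" using assms(2,3) S_sub by (cases m) auto
  have "Occ m' j (a + \<rho>^m' * uu j)" using Occ_sub assms m' by simp
  then have "Occ (m' + 1 - j) 1 (a + \<rho>^m' * uu j)"
    using Occ_norm[of j m'] assms m' S_sub by auto
  then show ?thesis using m' by auto
qed

lemma Occ_unb: "\<exists>m\<ge>K. \<exists>a. Occ m 1 a"
proof -
  obtain t a where ta: "t \<in> {1..N}" "\<forall>k w. (k,w) \<in> st1 (K+N) t \<longrightarrow> (k, a + w) \<in> D"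
    using D_occ by blast
  then have "Occ (K+N) t a" unfolding Occ_def by blast
  then have "Occ (K + N + 1 - t) 1 a" using Occ_norm[of t "K+N"] ta by auto
  moreover have "K + N + 1 - t \<ge> K" using ta by auto
  ultimately show ?thesis by blast
qed

lemma wv_le: "wv k \<le> (\<Sum>k=1..N. wv k)"
proof (cases "k \<in> {1..N}")
  case True then show ?thesis by (intro member_le_sum) (auto simp: wv_nonneg)
next
  case False then show ?thesis using wv_out by (simp add: sum_nonneg wv_nonneg)
qed

lemma eigen: assumes j: "j \<in> S" shows "(Mop ^^ j) wv k = \<rho>^j * wv k"
proof (rule ccontr)
  define \<delta> where "\<delta> = (Mop ^^ j) wv k - \<rho>^j * wv k"
  assume "(Mop ^^ j) wv k \<noteq> \<rho>^j * wv k"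
  then have d: "\<bar>\<delta>\<bar> > 0" unfolding \<delta>_def by simp
  define B where "B = (\<Sum>k=1..N. wv k) + \<rho>^N"
  have B0: "0 \<le> B" unfolding B_def using rpos by (auto intro!: add_nonneg_nonneg sum_nonneg wv_nonneg)
  obtain n0 where n0: "(1 + 2^j) * B * \<rho> * p / \<bar>\<delta>\<bar> < \<rho>^n0" using real_arch_pow[OF rho1] by blast
  obtain m a where ma: "m \<ge> n0 + j" "Occ m 1 a" using Occ_unb by blast
  have jm: "j \<le> m" using ma by simp
  obtain a' where a': "Occ (m - j) 1 a'" using Occ_down[OF ma(2) j jm] by blast
  define E where "E = (\<lambda>n k. zz n 1 k - (\<rho>^n/\<rho>)/p * wv k)"
  have Ebound: "\<forall>k. \<bar>E n k\<bar> \<le> B" if "Occ n 1 a0" for n a0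
  proof
    fix k
    have "\<bar>E n k\<bar> \<le> wv k + \<rho>^N" unfolding E_def using patch_est[of 1 n a0 k] that N2 by simp
    then show "\<bar>E n k\<bar> \<le> B" unfolding B_def using wv_le[of k] by linarith
  qed
  define c' where "c' = (\<rho>^(m-j)/\<rho>)/p"
  have zzmj: "zz (m-j) 1 = (\<lambda>k. E (m-j) k + c' * wv k)" unfolding E_def c'_def by auto
  have "zz m 1 = (Mop ^^ j) (zz (m-j) 1)" using zz_iter[of "m-j" j] jm by simp
  also have "\<dots> = (\<lambda>k. (Mop ^^ j) (E (m-j)) k + c' * (Mop ^^ j) wv k)"
    unfolding zzmj by (rule Mop_iter_lin)
  finally have e1: "zz m 1 k = (Mop ^^ j) (E (m-j)) k + c' * (Mop ^^ j) wv k" by simp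
  have pm: "\<rho>^m = \<rho>^(m-j) * \<rho>^j" using jm by (simp add: power_add[symmetric])
  have e2: "zz m 1 k = E m k + c' * \<rho>^j * wv k" unfolding E_def c'_def pm by simp
  have "c' * \<delta> = E m k - (Mop ^^ j) (E (m-j)) k" using e1 e2 unfolding \<delta>_def by (simp add: algebra_simps)
  then have "\<bar>c' * \<delta>\<bar> \<le> \<bar>E m k\<bar> + \<bar>(Mop ^^ j) (E (m-j)) k\<bar>"
    by (simp add: abs_triangle_ineq4)
  moreover have "\<bar>E m k\<bar> \<le> B" using Ebound[OF ma(2)] by blast
  moreover have "\<bar>(Mop ^^ j) (E (m-j)) k\<bar> \<le> 2^j * B" using Mop_iter_bound[OF Ebound[OF a'], of j] by blast
  ultimately have "\<bar>c' * \<delta>\<bar> \<le> B + 2^j * B" by linarith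
  then have A: "c' * \<bar>\<delta>\<bar> \<le> (1 + 2^j) * B" unfolding c'_def using rpos p_pos by (simp add: abs_mult algebra_simps)
  have "\<rho>^n0 \<le> \<rho>^(m-j)" using ma(1) rho1 by (intro power_increasing) auto
  then have "\<rho>^n0 / \<rho> / p * \<bar>\<delta>\<bar> \<le> c' * \<bar>\<delta>\<bar>" unfolding c'_def using rpos p_pos d
    by (intro mult_right_mono divide_right_mono) auto
  with A have "\<rho>^n0 / \<rho> / p * \<bar>\<delta>\<bar> \<le> (1 + 2^j) * B" by linarith
  then have "\<rho>^n0 \<le> (1 + 2^j) * B * \<rho> * p / \<bar>\<delta>\<bar>" using rpos p_pos d
    by (simp add: field_simps)
  with n0 show False by linarith
qed

lemma wv_pos: "\<exists>k0. wv k0 > 0"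
proof -
  obtain t a where ta: "t \<in> {1..N}" "\<forall>k w. (k,w) \<in> st1 0 t \<longrightarrow> (k, a + w) \<in> D"
    using D_occ by blast
  then have x: "(t, a) \<in> D" by auto
  define c where "c = a - of_int \<lfloor>a/p\<rfloor> * p"
  have f1: "of_int \<lfloor>a/p\<rfloor> \<le> a/p" "a/p < of_int \<lfloor>a/p\<rfloor> + 1"
    using floor_correct[of "a/p"] by auto
  have f3: "of_int \<lfloor>a/p\<rfloor> * p \<le> a" using f1(1) p_pos by (simp add: le_divide_eq)
  have f4: "a < (of_int \<lfloor>a/p\<rfloor> + 1) * p" using pos_divide_less_eq[OF p_pos] f1(2) by blast
  have c: "0 \<le> c" "c < p" unfolding c_def using f3 f4 by (auto simp: algebra_simps)
  have "a \<in> W (a - c) p t" unfolding W_def using x c by auto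
  then have "cnt t (a - c) p > 0" unfolding cnt_def using W_finite[of p] p_pos
    by (metis card_gt_0_iff empty_iff less_le)
  then have "cnt t 0 p > 0" using cnt_indep by metis
  then show ?thesis unfolding wv_def by auto
qed

lemma rat_pow: assumes "j \<in> S" shows "\<rho>^j \<in> \<rat>"
proof -
  obtain k0 where k0: "wv k0 > 0" using wv_pos by blast
  have "\<forall>k. wv k \<in> \<int>" unfolding wv_def by auto
  then have "(Mop ^^ j) wv k0 \<in> \<int>" using Mop_Ints by blast
  moreover have "\<rho>^j = (Mop ^^ j) wv k0 / wv k0" using eigen[OF assms, of k0] k0 by simp
  moreover have "wv k0 \<in> \<int>" unfolding wv_def by auto
  ultimately show ?thesis by (metis Ints_subset_Rats Rats_divide subsetD)
qed

end



context tset begin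

lemma sumS: "(\<Sum>j\<in>S. 1/\<rho>^j) = 1"
proof -
  have "(\<Sum>j\<in>S. 1/\<rho>^j) = (\<Sum>j\<in>{1..N}. if b j = 1 then 1/\<rho>^j else 0)"
    unfolding S_def by (rule sum.inter_filter) simp
  also have "\<dots> = (\<Sum>j=1..N. real (b j) / \<rho> ^ j)"
  proof (rule sum.cong[OF refl])
    fix j assume "j \<in> {1..N}"
    then have "b j = 0 \<or> b j = 1" using b01 by auto
    then show "(if b j = 1 then 1/\<rho>^j else 0) = real (b j) / \<rho> ^ j" by auto
  qed
  finally show ?thesis using sumb by simp
qed

lemma not_all_rat: "\<not> (\<forall>j\<in>S. \<rho>^j \<in> \<rat>)"
proof
  assume allq: "\<forall>j\<in>S. \<rho>^j \<in> \<rat>"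
  define P where "P = (\<lambda>r::nat. 1 \<le> r \<and> \<rho>^r \<in> \<rat>)"
  have PN: "P N" unfolding P_def using allq NS N2 by auto
  define r0 where "r0 = (LEAST r. P r)"
  have Pr0: "P r0" unfolding r0_def by (rule LeastI[of P N, OF PN])
  have r0min: "\<And>r. P r \<Longrightarrow> r0 \<le> r" unfolding r0_def by (rule Least_le)
  have r1: "1 \<le> r0" and yq: "\<rho>^r0 \<in> \<rat>" using Pr0 unfolding P_def by auto
  have dv: "r0 dvd j" if "j \<in> S" for j
  proof (rule ccontr)
    assume nd: "\<not> r0 dvd j"
    define q where "q = j div r0"
    define m where "m = j mod r0"
    have jd: "j = r0 * q + m" unfolding q_def m_def by simp
    have m1: "1 \<le> m" using nd unfolding m_def by (simp add: dvd_eq_mod_eq_0)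
    have mlt: "m < r0" unfolding m_def using r1 by simp
    have "\<rho>^j = (\<rho>^r0)^q * \<rho>^m" unfolding jd by (simp add: power_add power_mult)
    then have "\<rho>^m = \<rho>^j / (\<rho>^r0)^q" using rpos by (simp add: field_simps)
    moreover have "\<rho>^j \<in> \<rat>" using allq that by blast
    ultimately have "\<rho>^m \<in> \<rat>" using yq by (simp add: Rats_divide Rats_power)
    then have "P m" unfolding P_def using m1 by simp
    then show False using r0min mlt by fastforce
  qed
  define y where "y = \<rho>^r0"
  have y1: "y > 1" unfolding y_def using rho1 r1 by (simp add: one_less_power)
  obtain a c :: int where ac: "c > 0" "coprime a c" "y = of_int a / of_int c"
    using Rats_cases'[OF yq[folded y_def]] by blast
  have a0: "a > 0" using ac y1 by (smt (verit) divide_nonpos_pos of_int_0_less_iff)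
  define E where "E = N div r0"
  have NE: "N = r0 * E" unfolding E_def using dv[OF NS] by simp
  define i where "i = (\<lambda>j. j div r0)"
  have ji: "j = r0 * i j" if "j \<in> S" for j unfolding i_def using dv[OF that] by simp
  have iE: "i j \<le> E" if "j \<in> S" for j
  proof -
    have "j \<le> N" using that S_sub by auto
    then show ?thesis unfolding i_def E_def by (rule div_le_mono)
  qed
  have iE2: "i j < E" if "j \<in> S" "j \<noteq> N" for j
  proof -
    have "j < N" using that S_sub by auto
    then have "r0 * i j < r0 * E" using ji[OF that(1)] NE by simp
    then show ?thesis by simp
  qed
  have "(\<Sum>j\<in>S. 1/y^(i j)) = 1"
  proof -
    have "(\<Sum>j\<in>S. 1/y^(i j)) = (\<Sum>j\<in>S. 1/\<rho>^j)"
    proof (rule sum.cong[OF refl])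
      fix j assume "j \<in> S"
      then have "\<rho>^j = y^(i j)" unfolding y_def using ji by (metis power_mult)
      then show "1/y^(i j) = 1/\<rho>^j" by simp
    qed
    then show ?thesis using sumS by simp
  qed
  then have s1: "(\<Sum>j\<in>S. of_int a^E / y^(i j)) = (of_int a^E :: real)"
    by (simp add: sum_distrib_left[symmetric] divide_inverse)
  have yc: "y * of_int c = of_int a" unfolding ac(3) using ac(1) by simp
  have y0: "y \<noteq> 0" using y1 by simp
  have tm: "of_int a^E / y^(i j) = (of_int (c^(i j) * a^(E - i j)) :: real)" if "j \<in> S" for j
  proof -
    have "(of_int a :: real)^E = of_int a^(E - i j) * of_int a^(i j)" using iE[OF that]
      by (simp add: power_add[symmetric])
    also have "(of_int a :: real)^(i j) = y^(i j) * of_int c^(i j)" unfolding yc[symmetric]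
      by (simp add: power_mult_distrib)
    finally have "(of_int a :: real)^E = (of_int (c^(i j) * a^(E - i j))) * y^(i j)" by simp
    then show ?thesis using y0 by (simp add: divide_eq_eq)
  qed
  have "(\<Sum>j\<in>S. (of_int (c^(i j) * a^(E - i j)) :: real)) = (\<Sum>j\<in>S. of_int a^E / y^(i j))"
    using tm by (intro sum.cong) auto
  also have "\<dots> = of_int (a^E)" using s1 by simp
  finally have "(of_int (\<Sum>j\<in>S. c^(i j) * a^(E - i j)) :: real) = of_int (a^E)"
    by (simp only: of_int_sum)
  then have eqi: "(\<Sum>j\<in>S. c^(i j) * a^(E - i j)) = a^E"
    by (simp only: of_int_eq_iff)
  have E1: "E \<ge> 1" using NE N2 by (cases E) auto
  have iN: "i N = E" unfolding i_def E_def by simp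
  have spl: "(\<Sum>j\<in>S. c^(i j) * a^(E - i j)) = c^E + (\<Sum>j\<in>S - {N}. c^(i j) * a^(E - i j))"
    using NS finS iN by (simp add: sum.remove)
  have d1: "a dvd (\<Sum>j\<in>S - {N}. c^(i j) * a^(E - i j))"
  proof (rule dvd_sum)
    fix j assume "j \<in> S - {N}"
    then have "E - i j \<ge> 1" using iE2 by fastforce
    then have "a dvd a^(E - i j)" by (intro dvd_power) auto
    then show "a dvd c^(i j) * a^(E - i j)" by (rule dvd_mult)
  qed
  have d2: "a dvd a^E" using E1 by (intro dvd_power) auto
  have "c^E = a^E - (\<Sum>j\<in>S - {N}. c^(i j) * a^(E - i j))" using spl eqi by linarith
  moreover have "a dvd a^E - (\<Sum>j\<in>S - {N}. c^(i j) * a^(E - i j))" by (rule dvd_diff[OF d2 d1])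
  ultimately have "a dvd c^E" by simp
  moreover have "coprime a (c^E)" using ac(2) by (simp add: coprime_power_right_iff)
  ultimately have "\<bar>a\<bar> = 1" using coprime_common_divisor_int[of a "c^E" a] by simp
  then have "a = 1" using a0 by simp
  then have "y \<le> 1" using ac by (simp add: divide_le_eq)
  then show False using y1 by simp
qed

end



context tset begin

lemma super_prod: "supertile b \<rho> N n tt0 = {(s,x). \<forall>i. (s i, x$i) \<in> st1 n (tt0 i)}"
proof (induction n arbitrary: tt0)
  case 0
  show ?case by (auto simp: fun_eq_iff vec_eq_iff)
next
  case (Suc n)
  show ?case
  proof (intro set_eqI iffI)
    fix e assume "e \<in> supertile b \<rho> N (Suc n) tt0"
    then obtain s u s' w where e: "e = (s', \<rho>^n *\<^sub>R u + w)" "(s,u) \<in> subd b \<rho> N tt0"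
      "(s',w) \<in> supertile b \<rho> N n s" by auto
    have "\<forall>i. (s' i, (\<rho>^n *\<^sub>R u + w)$i) \<in> st1 (Suc n) (tt0 i)"
    proof
      fix i
      have "(s i, u$i) \<in> sub1 b \<rho> N (tt0 i)" using e(2) unfolding subd_def by auto
      moreover have "(s' i, w$i) \<in> st1 n (s i)" using e(3) Suc.IH by auto
      ultimately show "(s' i, (\<rho>^n *\<^sub>R u + w)$i) \<in> st1 (Suc n) (tt0 i)"
        unfolding st1.simps(2)[of n] by auto
    qed
    then show "e \<in> {(s,x). \<forall>i. (s i, x$i) \<in> st1 (Suc n) (tt0 i)}" using e(1) by auto
  next
    fix e assume "e \<in> {(s,x). \<forall>i. (s i, x$i) \<in> st1 (Suc n) (tt0 i)}"
    then obtain s' x where e: "e = (s',x)" "\<forall>i. (s' i, x$i) \<in> st1 (Suc n) (tt0 i)" by auto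
    then have "\<forall>i. \<exists>su. x$i = \<rho>^n * snd (fst su) + snd su \<and> fst su \<in> sub1 b \<rho> N (tt0 i)
                   \<and> (s' i, snd su) \<in> st1 n (fst (fst su))"
      unfolding st1.simps(2)[of n] by force
    then obtain F where F: "\<forall>i. x$i = \<rho>^n * snd (fst (F i)) + snd (F i) \<and> fst (F i) \<in> sub1 b \<rho> N (tt0 i)
                   \<and> (s' i, snd (F i)) \<in> st1 n (fst (fst (F i)))"
      by metis
    define s where "s = (\<lambda>i. fst (fst (F i)))"
    define u where "u = (\<chi> i. snd (fst (F i)))"
    define w where "w = (\<chi> i. snd (F i))"
    have "(s,u) \<in> subd b \<rho> N tt0" unfolding subd_def s_def u_def using F by auto
    moreover have "(s',w) \<in> supertile b \<rho> N n s" unfolding Suc.IH s_def w_def using F by auto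
    moreover have "x = \<rho>^n *\<^sub>R u + w" unfolding u_def w_def using F by (auto simp: vec_eq_iff)
    ultimately show "e \<in> supertile b \<rho> N (Suc n) tt0" using e(1) by auto
  qed
qed

lemma tile_corner: "u \<in> tile \<rho> s u" "u + (\<chi> i. 1/\<rho>^(s i)) \<in> tile \<rho> s u"
  unfolding tile_def using rpos by auto

lemma tile_inj: assumes "tile \<rho> s u = tile \<rho> s' u'" shows "s = s' \<and> u = u'"
proof -
  have uu: "u = u'"
  proof -
    have "u \<in> tile \<rho> s' u'" "u' \<in> tile \<rho> s u" using tile_corner assms by blast+
    then show ?thesis unfolding tile_def by (auto simp: vec_eq_iff intro: order_antisym)
  qed
  have "s i = s' i" for i
  proof -
    have "u + (\<chi> i. 1/\<rho>^(s i)) \<in> tile \<rho> s' u'" "u' + (\<chi> i. 1/\<rho>^(s' i)) \<in> tile \<rho> s u"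
      using tile_corner assms by blast+
    then have "1/\<rho>^(s i) \<le> 1/\<rho>^(s' i)" "1/\<rho>^(s' i) \<le> 1/\<rho>^(s i)" unfolding tile_def uu by auto
    then have "\<rho>^(s i) = \<rho>^(s' i)" using rpos by (simp add: divide_le_eq_1)
    then show ?thesis using rho1 by (simp add: power_inject_exp)
  qed
  then show ?thesis using uu by auto
qed

lemma tile_transl: "(\<lambda>x. l + x) ` tile \<rho> s u = tile \<rho> s (u + l)"
proof (intro set_eqI iffI)
  fix y assume "y \<in> (\<lambda>x. l + x) ` tile \<rho> s u"
  then show "y \<in> tile \<rho> s (u + l)" unfolding tile_def by auto
next
  fix y assume "y \<in> tile \<rho> s (u + l)"
  then have "y - l \<in> tile \<rho> s u" unfolding tile_def by (simp add: algebra_simps)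
  then show "y \<in> (\<lambda>x. l + x) ` tile \<rho> s u" by (auto intro!: image_eqI[of _ _ "y - l"])
qed

end



locale dD = tset +
  fixes T :: "(real^'n::finite) set set" and t :: "nat \<Rightarrow> 'n \<Rightarrow> nat" and v :: "nat \<Rightarrow> real^'n"
  assumes tess: "tessellation T"
    and tt: "\<And>n i. t n i \<in> {1..N}"
    and nest: "\<And>n. patch b \<rho> N n (t n) (v n) \<subseteq> patch b \<rho> N (Suc n) (t (Suc n)) (v (Suc n))"
    and TU: "T = (\<Union>n. patch b \<rho> N n (t n) (v n))"
begin

definition Dn :: "nat \<Rightarrow> 'n \<Rightarrow> (nat \<times> real) set" where
  "Dn n i = {(k, v n $ i + w) | k w. (k,w) \<in> st1 n (t n i)}"

definition DD :: "'n \<Rightarrow> (nat \<times> real) set" where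
  "DD i = (\<Union>n. Dn n i)"

lemma choose_full:
  assumes "\<forall>j. f j \<in> st1 n (t n j)"
  shows "tile \<rho> (\<lambda>j. fst (f j)) (v n + (\<chi> j. snd (f j))) \<in> patch b \<rho> N n (t n) (v n)"
proof -
  have "((\<lambda>j. fst (f j)), (\<chi> j. snd (f j))) \<in> supertile b \<rho> N n (t n)"
    unfolding super_prod using assms by auto
  then show ?thesis unfolding patch_def by blast
qed

lemma patch_char: "A \<in> patch b \<rho> N n (t n) (v n) \<Longrightarrow>
   \<exists>s x. A = tile \<rho> s x \<and> (\<forall>j. (s j, x$j) \<in> Dn n j)"
  unfolding patch_def super_prod Dn_def by fastforce

lemma st1_ne: "\<exists>e. e \<in> st1 n (t n j)" using st1_nonempty[OF tt] by blast

lemma extend: assumes "(k,w) \<in> st1 n (t n i)"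
  shows "\<exists>f. (\<forall>j. f j \<in> st1 n (t n j)) \<and> f i = (k,w)"
proof -
  define f where "f = (\<lambda>j. if j = i then (k,w) else (SOME e. e \<in> st1 n (t n j)))"
  have "\<forall>j. f j \<in> st1 n (t n j)" unfolding f_def using assms st1_ne by (auto intro: someI_ex)
  then show ?thesis unfolding f_def by auto
qed

lemma Dn_mono: "Dn n i \<subseteq> Dn (Suc n) i"
proof
  fix e assume "e \<in> Dn n i"
  then obtain k w where e: "e = (k, v n $ i + w)" "(k,w) \<in> st1 n (t n i)" unfolding Dn_def by auto
  obtain f where f: "\<forall>j. f j \<in> st1 n (t n j)" "f i = (k,w)" using extend[OF e(2)] by blast
  have "tile \<rho> (\<lambda>j. fst (f j)) (v n + (\<chi> j. snd (f j))) \<in> patch b \<rho> N (Suc n) (t (Suc n)) (v (Suc n))"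
    using choose_full[OF f(1)] nest by blast
  then obtain s x where sx: "tile \<rho> (\<lambda>j. fst (f j)) (v n + (\<chi> j. snd (f j))) = tile \<rho> s x"
    "\<forall>j. (s j, x$j) \<in> Dn (Suc n) j" using patch_char by blast
  have eqs: "(\<lambda>j. fst (f j)) = s \<and> v n + (\<chi> j. snd (f j)) = x" by (rule tile_inj[OF sx(1)])
  then have "s i = k" "x$i = v n $ i + w" using f(2) by auto
  then show "e \<in> Dn (Suc n) i" using e(1) sx(2) by metis
qed

lemma Dn_mono': "n \<le> n' \<Longrightarrow> Dn n i \<subseteq> Dn n' i"
  by (induction n' rule: dec_induct) (use Dn_mono in auto)

lemma T_char: "A \<in> T \<longleftrightarrow> (\<exists>s x. A = tile \<rho> s x \<and> (\<forall>j. (s j, x$j) \<in> DD j))"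
proof
  assume "A \<in> T"
  then obtain n where "A \<in> patch b \<rho> N n (t n) (v n)" using TU by auto
  then obtain s x where sx: "A = tile \<rho> s x" "\<forall>j. (s j, x$j) \<in> Dn n j" using patch_char by blast
  then have "\<forall>j. (s j, x$j) \<in> DD j" unfolding DD_def by blast
  then show "\<exists>s x. A = tile \<rho> s x \<and> (\<forall>j. (s j, x$j) \<in> DD j)" using sx(1) by blast
next
  assume "\<exists>s x. A = tile \<rho> s x \<and> (\<forall>j. (s j, x$j) \<in> DD j)"
  then obtain s x where sx: "A = tile \<rho> s x" "\<forall>j. (s j, x$j) \<in> DD j" by blast
  then have "\<forall>j. \<exists>n. (s j, x$j) \<in> Dn n j" unfolding DD_def by auto
  then obtain nf where nf: "\<forall>j. (s j, x$j) \<in> Dn (nf j) j" by metis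
  define n where "n = Max (range nf)"
  have "nf j \<le> n" for j unfolding n_def by (rule Max_ge) auto
  then have "\<forall>j. (s j, x$j) \<in> Dn n j" using nf Dn_mono' by blast
  then have "\<forall>j. (s j, (x - v n)$j) \<in> st1 n (t n j)"
  proof (intro allI)
    fix j assume "\<forall>j. (s j, x$j) \<in> Dn n j"
    then obtain w where "x$j = v n $ j + w" "(s j, w) \<in> st1 n (t n j)" unfolding Dn_def by blast
    then show "(s j, (x - v n)$j) \<in> st1 n (t n j)" by simp
  qed
  then have "(s, x - v n) \<in> supertile b \<rho> N n (t n)" unfolding super_prod by auto
  then have "tile \<rho> s (v n + (x - v n)) \<in> patch b \<rho> N n (t n) (v n)" unfolding patch_def by blast
  then show "A \<in> T" using sx TU by auto
qed

lemma DD_ne: "\<exists>e. e \<in> DD j"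
proof -
  obtain k w where "(k,w) \<in> st1 0 (t 0 j)" using st1_ne by (metis surj_pair)
  then have "(k, v 0 $ j + w) \<in> Dn 0 j" unfolding Dn_def by blast
  then show ?thesis unfolding DD_def by blast
qed

lemma extendD: assumes "(k,a) \<in> DD i"
  shows "\<exists>s x. tile \<rho> s x \<in> T \<and> s i = k \<and> x$i = a"
proof -
  obtain G where G: "\<forall>j. G j \<in> DD j" using DD_ne by metis
  define s where "s = (\<lambda>j. if j = i then k else fst (G j))"
  define x where "x = (\<chi> j. if j = i then a else snd (G j))"
  have "\<forall>j. (s j, x$j) \<in> DD j" unfolding s_def x_def using G assms by auto
  then have "tile \<rho> s x \<in> T" using T_char by blast
  moreover have "s i = k" "x$i = a" unfolding s_def x_def by auto
  ultimately show ?thesis by blast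
qed

lemma DD_types: assumes "(k,a) \<in> DD i" shows "k \<in> {1..N}"
proof -
  obtain n w where "(k,w) \<in> st1 n (t n i)" using assms unfolding DD_def Dn_def by blast
  then show ?thesis using st1_bounds[OF tt] by blast
qed

lemma DD_shift: assumes "(k,a) \<in> DD i" "\<forall>A\<in>T. (\<lambda>x. l + x) ` A \<in> T"
  shows "(k, a + l$i) \<in> DD i"
proof -
  obtain s x where sx: "tile \<rho> s x \<in> T" "s i = k" "x$i = a" using extendD[OF assms(1)] by blast
  then have "tile \<rho> s (x + l) \<in> T" using assms(2) tile_transl by metis
  then obtain s' x' where e: "tile \<rho> s (x + l) = tile \<rho> s' x'" "\<forall>j. (s' j, x'$j) \<in> DD j"
    using T_char by blast
  have "s = s' \<and> x + l = x'" by (rule tile_inj[OF e(1)])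
  then have "s' i = k" "x'$i = a + l$i" using sx by auto
  then show ?thesis using e(2) by metis
qed

end



context dD begin

lemma DD_disj: assumes "(k,a) \<in> DD i" "(k',a') \<in> DD i" "a \<le> a'" "(k,a) \<noteq> (k',a')"
  shows "a + 1/\<rho>^k \<le> a'"
proof (rule ccontr)
  assume "\<not> a + 1/\<rho>^k \<le> a'"
  then have lt: "a' < a + 1/\<rho>^k" by simp
  obtain G where G: "\<forall>j. G j \<in> DD j" using DD_ne by metis
  define s where "s = (\<lambda>j. if j = i then k else fst (G j))"
  define x where "x = (\<chi> j. if j = i then a else snd (G j))"
  define s' where "s' = (\<lambda>j. if j = i then k' else fst (G j))"
  define x' where "x' = (\<chi> j. if j = i then a' else snd (G j))"
  have "\<forall>j. (s j, x$j) \<in> DD j"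
  proof
    fix j show "(s j, x$j) \<in> DD j" by (cases "j = i") (simp_all add: s_def x_def G assms(1))
  qed
  then have A: "tile \<rho> s x \<in> T" using T_char by blast
  have "\<forall>j. (s' j, x'$j) \<in> DD j"
  proof
    fix j show "(s' j, x'$j) \<in> DD j" by (cases "j = i") (simp_all add: s'_def x'_def G assms(2))
  qed
  then have A': "tile \<rho> s' x' \<in> T" using T_char by blast
  have ne: "tile \<rho> s x \<noteq> tile \<rho> s' x'"
  proof
    assume "tile \<rho> s x = tile \<rho> s' x'"
    then have "s = s' \<and> x = x'" by (rule tile_inj)
    then have "s i = s' i" "x$i = x'$i" by auto
    then show False using assms(4) unfolding s_def s'_def x_def x'_def by simp
  qed
  have null: "tile \<rho> s x \<inter> tile \<rho> s' x' \<in> sets lebesgue"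
    "emeasure lebesgue (tile \<rho> s x \<inter> tile \<rho> s' x') = 0"
  proof -
    have "\<forall>A\<in>T. \<forall>B\<in>T. A \<noteq> B \<longrightarrow> A \<inter> B \<in> sets lebesgue \<and> emeasure lebesgue (A \<inter> B) = 0"
      using tess unfolding tessellation_def by blast
    then have "tile \<rho> s x \<inter> tile \<rho> s' x' \<in> sets lebesgue \<and> emeasure lebesgue (tile \<rho> s x \<inter> tile \<rho> s' x') = 0"
      using A A' ne by blast
    then show "tile \<rho> s x \<inter> tile \<rho> s' x' \<in> sets lebesgue"
      "emeasure lebesgue (tile \<rho> s x \<inter> tile \<rho> s' x') = 0" by auto
  qed
  define h where "h = min (a + 1/\<rho>^k) (a' + 1/\<rho>^k')"
  have h: "a' < h" unfolding h_def using lt rpos by simp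
  define lo where "lo = (\<chi> j. if j = i then a' else snd (G j))"
  define hi where "hi = (\<chi> j. if j = i then h else snd (G j) + 1/\<rho>^(fst (G j)))"
  define mid where "mid = (\<chi> j. (lo$j + hi$j)/2)"
  have lohi: "lo$j < hi$j" for j unfolding lo_def hi_def using h rpos by auto
  have "mid \<in> box lo hi" unfolding mem_box_cart mid_def using lohi by (auto simp: field_simps)
  then have pos: "0 < emeasure lebesgue (box lo hi)"
    by (auto simp: emeasure_lborel_box_eq mem_box algebra_simps intro!: prod_pos)
  have sub: "box lo hi \<subseteq> tile \<rho> s x \<inter> tile \<rho> s' x'"
  proof
    fix y assume "y \<in> box lo hi"
    then have y: "lo$j < y$j \<and> y$j < hi$j" for j unfolding mem_box_cart by auto
    have h1: "h \<le> a + 1/\<rho>^k" "h \<le> a' + 1/\<rho>^k'" unfolding h_def by auto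
    have "x$j \<le> y$j \<and> y$j \<le> x$j + 1/\<rho>^(s j)" for j
    proof (cases "j = i")
      case True
      then have "a' < y$j" "y$j < h" using y[of j] unfolding lo_def hi_def by auto
      then show ?thesis using True assms(3) h1 unfolding x_def s_def by simp
    next
      case False
      then show ?thesis using y[of j] unfolding x_def s_def lo_def hi_def by simp
    qed
    moreover have "x'$j \<le> y$j \<and> y$j \<le> x'$j + 1/\<rho>^(s' j)" for j
    proof (cases "j = i")
      case True
      then have "a' < y$j" "y$j < h" using y[of j] unfolding lo_def hi_def by auto
      then show ?thesis using True h1 unfolding x'_def s'_def by simp
    next
      case False
      then show ?thesis using y[of j] unfolding x'_def s'_def lo_def hi_def by simp
    qed
    ultimately show "y \<in> tile \<rho> s x \<inter> tile \<rho> s' x'" unfolding tile_def by auto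
  qed
  have "emeasure lebesgue (box lo hi) \<le> emeasure lebesgue (tile \<rho> s x \<inter> tile \<rho> s' x')"
    by (rule emeasure_mono[OF sub null(1)])
  then show False using pos null(2) by simp
qed

lemma no_lattice_inv: assumes "lattice L" "\<forall>l\<in>L. (\<lambda>A. (\<lambda>x. l + x) ` A) ` T = T"
  shows False
proof -
  have "\<exists>l\<in>L. \<exists>i. l$i \<noteq> 0"
  proof (rule ccontr)
    assume "\<not> (\<exists>l\<in>L. \<exists>i. l$i \<noteq> 0)"
    then have "L \<subseteq> {0}" by (auto simp: vec_eq_iff)
    then have "span L \<subseteq> {0}" by (metis span_empty span_insert_0 span_mono subset_singletonD)
    moreover have "span L = UNIV" using assms(1) unfolding lattice_def by blast
    moreover have "((\<chi> j. 1) :: real^'n) \<noteq> 0" by (simp add: vec_eq_iff)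
    ultimately show False by blast
  qed
  then obtain l i where li: "l \<in> L" "l$i \<noteq> 0" by blast
  have ml: "-l \<in> L" using assms(1) li(1) unfolding lattice_def by (metis diff_0)
  have inv: "\<forall>A\<in>T. (\<lambda>x. m + x) ` A \<in> T" if "m \<in> L" for m
    using assms(2) that by blast
  have sh: "(k, a + m$i) \<in> DD i" if "(k,a) \<in> DD i" "m \<in> L" for k a m
    using DD_shift[OF that(1) inv[OF that(2)]] .
  define p where "p = \<bar>l$i\<bar>"
  have p0: "p > 0" unfolding p_def using li by simp
  have s1: "(k, a + p) \<in> DD i" if "(k,a) \<in> DD i" for k a
    using sh[OF that li(1)] sh[OF that ml] unfolding p_def by (cases "l$i \<ge> 0") auto
  have s2: "(k, a - p) \<in> DD i" if "(k,a) \<in> DD i" for k a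
    using sh[OF that li(1)] sh[OF that ml] unfolding p_def by (cases "l$i \<ge> 0") auto
  interpret O: oneD N b \<rho> "DD i" p
  proof
    show "p > 0" by (rule p0)
    show "\<And>k x. (k,x) \<in> DD i \<Longrightarrow> k \<in> {1..N}" by (rule DD_types)
    show "\<And>k x. (k,x) \<in> DD i \<Longrightarrow> (k, x + p) \<in> DD i" by (rule s1)
    show "\<And>k x. (k,x) \<in> DD i \<Longrightarrow> (k, x - p) \<in> DD i" by (rule s2)
    show "\<And>k x k' x'. (k,x) \<in> DD i \<Longrightarrow> (k',x') \<in> DD i \<Longrightarrow> x \<le> x' \<Longrightarrow> (k,x) \<noteq> (k',x') \<Longrightarrow> x + 1/\<rho>^k \<le> x'"
      by (rule DD_disj)
    show "\<And>n. \<exists>t a. t \<in> {1..N} \<and> (\<forall>k w. (k,w) \<in> st1 n t \<longrightarrow> (k, a + w) \<in> DD i)"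
    proof -
      fix n
      have "\<forall>k w. (k,w) \<in> st1 n (t n i) \<longrightarrow> (k, v n $ i + w) \<in> DD i"
        unfolding DD_def Dn_def by blast
      then show "\<exists>t' a. t' \<in> {1..N} \<and> (\<forall>k w. (k,w) \<in> st1 n t' \<longrightarrow> (k, a + w) \<in> DD i)"
        using tt by blast
    qed
  qed
  show False using O.rat_pow not_all_rat by blast
qed

end



lemma rho_gt1:
  fixes N :: nat and b :: "nat \<Rightarrow> nat" and \<rho> :: real
  assumes N2: "N \<ge> 2"
    and b01: "\<forall>j\<in>{1..N}. b j \<in> {0, 1}"
    and bN: "b N = 1"
    and big: "(\<Sum>j=1..N. b j * 2 ^ (N - j)) > 1"
    and root: "\<rho> ^ N - (\<Sum>j=1..N. real (b j) * \<rho> ^ (N - j)) = 0"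
    and largest: "\<forall>x::real. x ^ N - (\<Sum>j=1..N. real (b j) * x ^ (N - j)) = 0 \<longrightarrow> x \<le> \<rho>"
  shows "\<rho> > 1"
proof -
  define f where "f = (\<lambda>x::real. x ^ N - (\<Sum>j=1..N. real (b j) * x ^ (N - j)))"
  have split: "{1..N} = insert N {1..<N}" using N2 by auto
  have "\<exists>j\<in>{1..<N}. b j = 1"
  proof (rule ccontr)
    assume "\<not> (\<exists>j\<in>{1..<N}. b j = 1)"
    then have z: "\<forall>j\<in>{1..<N}. b j = 0" using b01 by fastforce
    have "(\<Sum>j=1..N. b j * 2 ^ (N - j)) = b N * 2^(N-N) + (\<Sum>j\<in>{1..<N}. b j * 2 ^ (N - j))"
      unfolding split by simp
    also have "(\<Sum>j\<in>{1..<N}. b j * 2 ^ (N - j)) = 0" using z by simp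
    finally show False using big bN by simp
  qed
  then obtain j0 where j0: "j0 \<in> {1..<N}" "b j0 = 1" by blast
  have "(\<Sum>j\<in>{j0, N}. real (b j)) \<le> (\<Sum>j=1..N. real (b j))"
    by (rule sum_mono2) (use j0 N2 in auto)
  then have s2: "(\<Sum>j=1..N. real (b j)) \<ge> 2" using j0 bN by simp
  have f1: "f 1 < 0" unfolding f_def using s2 by simp
  define X where "X = real N + 1"
  have X1: "X \<ge> 1" unfolding X_def by simp
  have "(\<Sum>j=1..N. real (b j) * X ^ (N - j)) \<le> (\<Sum>j=1..N. X ^ (N - 1))"
  proof (rule sum_mono)
    fix j assume j: "j \<in> {1..N}"
    have "real (b j) \<le> 1" using b01 j by fastforce
    moreover have "X ^ (N - j) \<le> X ^ (N - 1)" using j X1 by (intro power_increasing) auto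
    moreover have "0 \<le> X ^ (N - j)" using X1 by simp
    ultimately show "real (b j) * X ^ (N - j) \<le> X ^ (N - 1)"
      by (metis mult_left_le_one_le mult.commute of_nat_0_le_iff order_trans)
  qed
  also have "\<dots> = real N * X ^ (N - 1)" by simp
  also have "\<dots> < X ^ N"
  proof -
    have "X ^ N = X * X ^ (N - 1)" using N2 by (metis Suc_diff_1 less_le_trans pos2 power_Suc)
    moreover have "X ^ (N-1) > 0" using X1 by simp
    ultimately show ?thesis unfolding X_def by (simp add: algebra_simps)
  qed
  finally have fX: "f X > 0" unfolding f_def by simp
  have "continuous_on {1..X} f" unfolding f_def by (intro continuous_intros)
  then obtain x where x: "1 \<le> x" "x \<le> X" "f x = 0" using IVT'[of f 1 0 X] f1 fX X1 by auto
  have "x \<noteq> 1" using x(3) f1 by auto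
  then have "x > 1" using x(1) by simp
  moreover have "x \<le> \<rho>" using largest x(3) unfolding f_def by blast
  ultimately show ?thesis by simp
qed

theorem mainTheorem9:
  fixes N :: nat and b :: "nat \<Rightarrow> nat" and \<rho> :: real
    and T :: "(real^'n::finite) set set"
  assumes "N \<ge> 2"
    and "\<forall>j\<in>{1..N}. b j \<in> {0, 1}"
    and "b N = 1"
    and "(\<Sum>j=1..N. b j * 2 ^ (N - j)) > 1"
    and "\<rho> ^ N - (\<Sum>j=1..N. real (b j) * \<rho> ^ (N - j)) = 0"
    and "\<forall>x::real. x ^ N - (\<Sum>j=1..N. real (b j) * x ^ (N - j)) = 0 \<longrightarrow> x \<le> \<rho>"
    and "inflation_tessellation b \<rho> N T"
  shows "\<not> periodic T"
proof
  assume per: "periodic T"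
  have r1: "\<rho> > 1" by (rule rho_gt1[OF assms(1-6)])
  have sumb: "(\<Sum>j=1..N. real (b j) / \<rho> ^ j) = 1"
  proof -
    have "(\<Sum>j=1..N. real (b j) / \<rho> ^ j) = (\<Sum>j=1..N. real (b j) * \<rho> ^ (N - j)) / \<rho>^N"
      unfolding sum_divide_distrib
    proof (rule sum.cong[OF refl])
      fix j assume "j \<in> {1..N}"
      then have "\<rho>^N = \<rho>^(N-j) * \<rho>^j" by (simp add: power_add[symmetric])
      then show "real (b j) / \<rho> ^ j = real (b j) * \<rho> ^ (N - j) / \<rho>^N" using r1 by (simp add: field_simps)
    qed
    also have "\<dots> = \<rho>^N / \<rho>^N" using assms(5) by simp
    also have "\<dots> = 1" using r1 by simp
    finally show ?thesis .
  qed
  interpret tset N b \<rho> using assms(1-3) r1 sumb by unfold_locales auto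
  obtain t v where tv: "tessellation T" "\<forall>n i. t n i \<in> {1..N}"
    "\<forall>n. patch b \<rho> N n (t n) (v n) \<subseteq> patch b \<rho> N (Suc n) (t (Suc n)) (v (Suc n))"
    "T = (\<Union>n. patch b \<rho> N n (t n) (v n))"
    using assms(7) unfolding inflation_tessellation_def by blast
  interpret dD N b \<rho> T t v using tv by unfold_locales auto
  obtain L where L: "lattice L" "\<forall>l\<in>L. (\<lambda>A. (\<lambda>x. l + x) ` A) ` T = T"
    using per unfolding periodic_def by blast
  show False by (rule no_lattice_inv[OF L])
qed



end
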